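(* If $q$ is an odd prime power then $f(X):=X^{q+2}+bX^q+cX$ does not permute $\mathbb{F}_{q^2}$ for any $b,c\in\mathbb{F}_{q^2}$ with $b\ne 0$. *)

theory Defs
  imports "HOL-Computational_Algebra.Primes"
begin

end

theory Submission imports Defs "HOL-Computational_Algebra.Polynomial" begin

lemma ff_pow_card:
  fixes x :: "'a::{field,finite}"
  shows "x ^ card (UNIV :: 'a set) = x"
proof (cases "x = 0")
  case False
  have "x * (\<Prod>y\<in>UNIV-{0}. x * y) = x * x ^ (card (UNIV :: 'a set) - 1) * \<Prod>(UNIV-{0})"
    by (simp add: prod.distrib mult_ac)
  also have "x * x ^ (card (UNIV :: 'a set) - 1) = x ^ Suc (card (UNIV :: 'a set) - 1)"
    by (subst power_Suc) auto
  also have "Suc (card (UNIV :: 'a set) - 1) = card (UNIV :: 'a set)"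
    using finite_UNIV_card_ge_0[where ?'a = 'a] by simp
  also have "(\<Prod>y\<in>UNIV-{0}. x * y) = (\<Prod>y\<in>UNIV-{0}. y)"
    by (rule prod.reindex_bij_witness[of _ "\<lambda>y. y / x" "\<lambda>y. x * y"]) (use False in auto)
  finally show ?thesis
    by simp
qed (use finite_UNIV_card_ge_0[where ?'a = 'a] in auto)

lemma ff_pow_card1:
  fixes x :: "'a::{field,finite}"
  assumes "x \<noteq> 0"
  shows "x ^ (card (UNIV :: 'a set) - 1) = 1"
proof -
  have "Suc (card (UNIV :: 'a set) - 1) = card (UNIV :: 'a set)"
    using finite_UNIV_card_ge_0[where ?'a = 'a] by simp
  hence "x * x ^ (card (UNIV :: 'a set) - 1) = x ^ card (UNIV :: 'a set)"
    by (metis power_Suc)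
  hence "x * x ^ (card (UNIV :: 'a set) - 1) = x * 1"
    using ff_pow_card[of x] by simp
  thus ?thesis using assms by simp
qed

lemma ff_of_nat_card:
  "of_nat (card (UNIV :: 'a::{field,finite} set)) = (0::'a)"
proof -
  have "(\<Sum>x\<in>(UNIV::'a set). x + 1) = (\<Sum>x\<in>UNIV. x)"
    by (rule sum.reindex_bij_witness[of _ "\<lambda>y. y - 1" "\<lambda>y. y + 1"]) auto
  moreover have "(\<Sum>x\<in>(UNIV::'a set). x + 1) = (\<Sum>x\<in>UNIV. x) + of_nat (card (UNIV::'a set))"
    by (simp only: sum.distrib sum_constant) simp
  ultimately show ?thesis by simp
qed

lemma ff_exists_nonroot:
  fixes dummy :: "'a::{field,finite}"
  assumes "0 < r" "r < card (UNIV :: 'a set) - 1"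
  shows "\<exists>a::'a. a \<noteq> 0 \<and> a ^ r \<noteq> 1"
proof (rule ccontr)
  assume "\<not> ?thesis"
  hence all: "\<And>a::'a. a \<noteq> 0 \<Longrightarrow> a ^ r = 1" by blast
  define P :: "'a poly" where "P = monom 1 r + [:-1:]"
  have dP: "degree P = r" using assms(1) unfolding P_def
    by (subst degree_add_eq_left) (auto simp: degree_monom_eq)
  have "P \<noteq> 0" using dP assms(1) by auto
  hence "card {x. poly P x = 0} \<le> r" using card_poly_roots_bound dP by metis
  moreover have "UNIV - {0} \<subseteq> {x. poly P x = 0}"
  proof
    fix x :: 'a assume "x \<in> UNIV - {0}"
    hence "x ^ r = 1" using all by blast
    thus "x \<in> {x. poly P x = 0}" unfolding P_def by (simp add: poly_monom)
  qed
  hence "card (UNIV - {0::'a}) \<le> card {x. poly P x = 0}"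
    by (intro card_mono) simp_all
  moreover have "card (UNIV - {0::'a}) = card (UNIV::'a set) - 1"
    by (rule card_Diff_singleton) simp_all
  ultimately show False using assms(2) by linarith
qed



lemma ff_card_ge2: "2 \<le> card (UNIV :: 'a::{field,finite} set)"
proof -
  have "{0::'a, 1} \<subseteq> UNIV" by simp
  hence "card {0::'a, 1} \<le> card (UNIV::'a set)" by (intro card_mono) simp_all
  thus ?thesis by simp
qed

lemma ff_power_sum_zero:
  fixes dummy :: "'a::{field,finite}"
  assumes "0 < e" "\<not> (card (UNIV :: 'a set) - 1) dvd e"
  shows "(\<Sum>x::'a\<in>UNIV. x ^ e) = 0"
proof -
  define N where "N = card (UNIV :: 'a set)"
  have N2: "N \<ge> 2" unfolding N_def by (rule ff_card_ge2)
  define r where "r = e mod (N - 1)"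
  have r0: "r > 0" using assms(2) unfolding r_def N_def by (metis dvd_eq_mod_eq_0 gr0I)
  have r1: "r < N - 1" unfolding r_def using N2 by simp
  obtain a :: 'a where a: "a \<noteq> 0" "a ^ r \<noteq> 1"
    using ff_exists_nonroot[OF r0, where 'a='a] r1 unfolding N_def by blast
  have "e = (N - 1) * (e div (N - 1)) + r" unfolding r_def by simp
  hence "a ^ e = (a ^ (N - 1)) ^ (e div (N - 1)) * a ^ r"
    by (metis power_add power_mult)
  also have "a ^ (N - 1) = 1" unfolding N_def by (rule ff_pow_card1[OF a(1)])
  finally have ae: "a ^ e \<noteq> 1" using a(2) by simp
  have "(\<Sum>x::'a\<in>UNIV. x ^ e) = (\<Sum>x::'a\<in>UNIV. (a * x) ^ e)"
    by (rule sum.reindex_bij_witness[of _ "\<lambda>y. a * y" "\<lambda>y. y / a"]) (use a(1) in auto)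
  also have "\<dots> = a ^ e * (\<Sum>x::'a\<in>UNIV. x ^ e)"
    by (simp add: power_mult_distrib sum_distrib_left)
  finally have "(a ^ e - 1) * (\<Sum>x::'a\<in>UNIV. x ^ e) = 0" by (simp add: algebra_simps)
  thus ?thesis using ae by simp
qed

lemma ff_power_sum_m1:
  "(\<Sum>x::'a::{field,finite}\<in>UNIV. x ^ (card (UNIV :: 'a set) - 1)) = -1"
proof -
  define N where "N = card (UNIV :: 'a set)"
  have N2: "N \<ge> 2" unfolding N_def by (rule ff_card_ge2)
  have "(\<Sum>x::'a\<in>UNIV. x ^ (N - 1)) = (\<Sum>x::'a\<in>UNIV - {0}. x ^ (N - 1)) + 0 ^ (N - 1)"
    by (subst sum.remove[of _ 0]) (simp_all add: add.commute)
  also have "(\<Sum>x::'a\<in>UNIV - {0}. x ^ (N - 1)) = (\<Sum>x::'a\<in>UNIV - {0}. 1)"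
    unfolding N_def by (intro sum.cong refl ff_pow_card1) auto
  also have "\<dots> = of_nat (N - 1)" by (simp add: card_Diff_singleton N_def)
  also have "\<dots> = of_nat N - 1" using N2 by (simp add: of_nat_diff)
  also have "of_nat N = (0::'a)" unfolding N_def by (rule ff_of_nat_card)
  finally show ?thesis using N2 unfolding N_def by simp
qed

lemma ff_char:
  fixes dummy :: "'a::{field,finite}" and p k :: nat
  assumes "card (UNIV :: 'a set) = p ^ k" "k \<ge> 1"
  shows "(of_nat p :: 'a) = 0"
proof -
  have "(of_nat p :: 'a) ^ k = 0" using ff_of_nat_card[where 'a='a] assms(1) by simp
  thus ?thesis by simp
qed

lemma prime_power_dvd_choose:
  fixes p k q j :: nat
  assumes "prime p" "q = p ^ k" "0 < j" "j < q"
  shows "p dvd (q choose j)"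
proof (rule ccontr)
  assume nd: "\<not> p dvd (q choose j)"
  have "coprime p (q choose j)" using assms(1) nd by (simp add: prime_imp_coprime)
  hence cop: "coprime (p ^ k) (q choose j)" by simp
  obtain j' where j': "j = Suc j'" using assms(3) by (cases j) auto
  obtain q' where q': "q = Suc q'" using assms(3,4) by (cases q) auto
  have "j * (q choose j) = q * (q' choose j')"
    unfolding j' q' by (rule Suc_times_binomial)
  hence "p ^ k dvd j * (q choose j)" using assms(2) by simp
  hence "p ^ k dvd j" using cop by (simp add: coprime_dvd_mult_left_iff)
  hence "q \<le> j" using assms(2,3) by (simp add: dvd_imp_le)
  thus False using assms(4) by simp
qed

lemma choose_qm1:
  fixes p k q m :: nat
  assumes "prime p" "q = p ^ k" "(of_nat p :: 'a::comm_ring_1) = 0" "m < q"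
  shows "(of_nat ((q - 1) choose m) :: 'a) = (-1) ^ m"
  using assms(4)
proof (induction m)
  case 0 then show ?case by simp
next
  case (Suc m)
  have q0: "q > 0" using Suc.prems by simp
  have "p dvd (q choose Suc m)" by (rule prime_power_dvd_choose[OF assms(1,2)]) (use Suc.prems in auto)
  then obtain t where "q choose Suc m = p * t" by blast
  hence z: "(of_nat (q choose Suc m) :: 'a) = 0" using assms(3) by simp
  have "q choose Suc m = ((q - 1) choose m) + ((q - 1) choose Suc m)"
    using q0 by (metis Suc_diff_1 binomial_Suc_Suc)
  hence "(of_nat ((q - 1) choose Suc m) :: 'a) = of_nat (q choose Suc m) - of_nat ((q - 1) choose m)"
    by simp
  also have "\<dots> = - ((-1) ^ m)" using z Suc by simp
  finally show ?case by simp
qed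

lemma keyE:
  fixes n m i :: nat
  assumes "i \<le> m" "m \<le> n" "0 < n"
  shows "((n + 1) * m + 2 * i + (n - m) = (n + 1) ^ 2 - 1) \<longleftrightarrow> (m = n \<and> 2 * i = n)"
proof -
  have e1: "(n + 1) * m + 2 * i + (n - m) = n * (m + 1) + 2 * i"
    using assms(2) by (simp add: algebra_simps)
  have e2: "(n + 1) ^ 2 - 1 = n * (n + 2)" by (simp add: power2_eq_square algebra_simps)
  show ?thesis
  proof (cases "m = n")
    case True then show ?thesis using e1 e2 by (simp add: algebra_simps)
  next
    case False
    hence "m + 1 \<le> n" using assms(2) by simp
    then obtain d where d: "n = m + 1 + d" using le_Suc_ex by blast
    have "n * (n + 2) = n * (m + 1) + n * (d + 2)" unfolding d by (simp add: algebra_simps)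
    moreover have "n * (d + 2) \<ge> n * 2" by (intro mult_le_mono2) simp
    moreover have "2 * i < n * 2" using assms d by simp
    ultimately have "n * (m + 1) + 2 * i < n * (n + 2)" by linarith
    then show ?thesis using e1 e2 False by simp
  qed
qed


lemma Ebound:
  fixes n m i :: nat
  assumes "i \<le> m" "m \<le> n" "0 < n"
  shows "0 < (n + 1) * m + 2 * i + (n - m) \<and> (n + 1) * m + 2 * i + (n - m) < 2 * ((n + 1) ^ 2 - 1)"
proof -
  have e1: "(n + 1) * m + 2 * i + (n - m) = n * (m + 1) + 2 * i"
    using assms(2) by (simp add: algebra_simps)
  have e2: "(n + 1) ^ 2 - 1 = n * (n + 2)" by (simp add: power2_eq_square algebra_simps)
  have "n * (m + 1) \<le> n * (n + 1)" using assms by (intro mult_le_mono2) simp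
  moreover have "n * (n + 1) + 2 * n < 2 * (n * (n + 2))" using assms(3) by (simp add: algebra_simps)
  moreover have "0 < n * (m + 1)" using assms(3) by simp
  ultimately show ?thesis unfolding e1 e2 using assms by linarith
qed

lemma not_dvd_between:
  fixes M E :: nat
  assumes "0 < E" "E < 2 * M" "E \<noteq> M"
  shows "\<not> M dvd E"
proof
  assume "M dvd E"
  then obtain t where t: "E = M * t" by blast
  show False
  proof (cases t)
    case 0 then show ?thesis using t assms by simp
  next
    case (Suc t')
    show ?thesis
    proof (cases t')
      case 0 then show ?thesis using t Suc assms by simp
    next
      case (Suc t'')
      have "E = M * (2 + t'')" using t \<open>t = Suc t'\<close> Suc by simp
      hence "E \<ge> 2 * M" by (simp add: algebra_simps)
      thus False using assms by simp
    qed
  qed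
qed

theorem lemma2p5:
  fixes b c :: "'a::{field,finite}" and p k q :: nat
  assumes "prime p" and "k \<ge> 1" and "q = p ^ k" and "odd q"
    and "card (UNIV :: 'a set) = q ^ 2"
    and "b \<noteq> 0"
  shows "\<not> bij (\<lambda>x::'a. x ^ (q + 2) + b * x ^ q + c * x)"
proof
  define F where "F = (\<lambda>x::'a. x ^ (q + 2) + b * x ^ q + c * x)"
  assume "bij (\<lambda>x::'a. x ^ (q + 2) + b * x ^ q + c * x)"
  hence bijF: "bij F" unfolding F_def .
  define N where "N = card (UNIV :: 'a set)"
  have p2: "p \<ge> 2" using assms(1) by (simp add: prime_ge_2_nat)
  have "p ^ 1 \<le> p ^ k" using assms(2) p2 by (intro power_increasing) simp_all
  hence q2: "q \<ge> 2" using p2 assms(3) by simp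
  define n where "n = q - 1"
  have qn: "q = n + 1" using q2 unfolding n_def by simp
  have n0: "0 < n" using q2 unfolding n_def by simp
  have evn: "even n" using assms(4) qn by simp
  define h where "h = n div 2"
  have h2: "2 * h = n" using evn unfolding h_def by simp
  have Nq: "N = (n + 1) ^ 2" using assms(5) qn unfolding N_def by simp
  have charp: "(of_nat p :: 'a) = 0"
    using ff_char[where 'a='a, of p "2 * k"] assms(2,3,5) by (simp add: power_mult mult.commute)
  have "(\<Sum>x\<in>UNIV. F x ^ n) = (\<Sum>x\<in>UNIV. x ^ n)"
    using sum.reindex_bij_betw[OF bijF, of "\<lambda>y. y ^ n"] by simp
  also have "\<dots> = 0"
  proof (rule ff_power_sum_zero[OF n0])
    have "n < N - 1" unfolding Nq using n0 by (simp add: power2_eq_square algebra_simps)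
    thus "\<not> (card (UNIV :: 'a set) - 1) dvd n" using n0 unfolding N_def[symmetric]
      by (auto dest: dvd_imp_le)
  qed
  finally have A: "(\<Sum>x\<in>UNIV. F x ^ n) = 0" .
  define T where "T = (\<lambda>m i. (of_nat (n choose m) :: 'a) * of_nat (m choose i) * b ^ (m - i) * c ^ (n - m))"
  define E where "E = (\<lambda>m i. (n + 1) * m + 2 * i + (n - m))"
  have pw: "F x ^ n = (\<Sum>m\<le>n. \<Sum>i\<le>m. T m i * x ^ E m i)" for x
  proof -
    have "F x = x ^ q * (x ^ 2 + b) + c * x" unfolding F_def by (simp add: algebra_simps power_add power2_eq_square)
    hence "F x ^ n = (\<Sum>m\<le>n. of_nat (n choose m) * (x ^ q * (x ^ 2 + b)) ^ m * (c * x) ^ (n - m))"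
      by (simp add: binomial_ring)
    also have "\<dots> = (\<Sum>m\<le>n. \<Sum>i\<le>m. T m i * x ^ E m i)"
    proof (rule sum.cong[OF refl])
      fix m assume m: "m \<in> {..n}"
      have "(x ^ 2 + b) ^ m = (\<Sum>i\<le>m. of_nat (m choose i) * (x ^ 2) ^ i * b ^ (m - i))"
        by (rule binomial_ring)
      hence "of_nat (n choose m) * (x ^ q * (x ^ 2 + b)) ^ m * (c * x) ^ (n - m)
          = (\<Sum>i\<le>m. of_nat (n choose m) * x ^ (q * m) * (c * x) ^ (n - m) * (of_nat (m choose i) * (x ^ 2) ^ i * b ^ (m - i)))"
        by (simp add: power_mult_distrib sum_distrib_left mult_ac flip: power_mult)
      also have "\<dots> = (\<Sum>i\<le>m. T m i * x ^ E m i)"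
      proof (rule sum.cong[OF refl])
        fix i assume "i \<in> {..m}"
        have ex: "x ^ E m i = x ^ (q * m) * (x ^ 2) ^ i * x ^ (n - m)"
          unfolding E_def qn by (simp add: power_add flip: power_mult)
        thus "of_nat (n choose m) * x ^ (q * m) * (c * x) ^ (n - m) * (of_nat (m choose i) * (x ^ 2) ^ i * b ^ (m - i))
            = T m i * x ^ E m i"
          unfolding T_def ex by (simp add: power_mult_distrib mult_ac)
      qed
      finally show "of_nat (n choose m) * (x ^ q * (x ^ 2 + b)) ^ m * (c * x) ^ (n - m) = (\<Sum>i\<le>m. T m i * x ^ E m i)" .
    qed
    finally show ?thesis .
  qed
  have S: "(\<Sum>x\<in>(UNIV::'a set). x ^ E m i) = (if m = n \<and> i = h then -1 else 0)"
    if mi: "i \<le> m" "m \<le> n" for m i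
  proof -
    have key: "(E m i = N - 1) \<longleftrightarrow> (m = n \<and> i = h)"
      unfolding E_def Nq using keyE[OF mi n0] h2 by auto
    have eb: "0 < E m i" "E m i < 2 * (N - 1)" unfolding E_def Nq using Ebound[OF mi n0] by auto
    show ?thesis
    proof (cases "m = n \<and> i = h")
      case True
      hence "E m i = N - 1" using key by simp
      thus ?thesis using True ff_power_sum_m1[where 'a='a] unfolding N_def by simp
    next
      case False
      hence "E m i \<noteq> N - 1" using key by simp
      hence "\<not> (N - 1) dvd E m i" using not_dvd_between eb by blast
      hence "(\<Sum>x\<in>(UNIV::'a set). x ^ E m i) = 0"
        using ff_power_sum_zero[OF eb(1), where 'a='a] unfolding N_def by blast
      thus ?thesis using False by simp
    qed
  qed
  have "(\<Sum>x\<in>UNIV. F x ^ n) = (\<Sum>x\<in>UNIV. \<Sum>m\<le>n. \<Sum>i\<le>m. T m i * x ^ E m i)"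
    by (simp add: pw)
  also have "\<dots> = (\<Sum>m\<le>n. \<Sum>i\<le>m. T m i * (\<Sum>x\<in>UNIV. x ^ E m i))"
    by (simp add: sum_distrib_left sum.swap[of _ UNIV])
  also have "\<dots> = (\<Sum>m\<le>n. \<Sum>i\<le>m. (if m = n \<and> i = h then - T m i else 0))"
    by (intro sum.cong refl) (auto simp: S)
  also have "\<dots> = (\<Sum>m\<le>n. (if m = n then - T n h else 0))"
  proof (intro sum.cong refl)
    fix m assume "m \<in> {..n}"
    show "(\<Sum>i\<le>m. (if m = n \<and> i = h then - T m i else 0)) = (if m = n then - T n h else 0)"
    proof (cases "m = n")
      case True
      have "h \<le> n" using h2 by simp
      thus ?thesis using True by (simp add: sum.delta)
    qed simp
  qed
  also have "\<dots> = - T n h" by simp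
  also have "T n h = (-1) ^ h * b ^ (n - h)"
  proof -
    have "h < q" using h2 qn by simp
    hence "(of_nat (n choose h) :: 'a) = (-1) ^ h"
      using choose_qm1[OF assms(1,3) charp] unfolding n_def by blast
    thus ?thesis unfolding T_def by simp
  qed
  finally have "(\<Sum>x\<in>UNIV. F x ^ n) = - ((-1) ^ h * b ^ (n - h))" .
  with A have "(-1) ^ h * b ^ (n - h) = (0::'a)" by simp
  thus False using assms(6) by simp
qed

end
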